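(* Let $r \in \mathbb{Q}_{>0}$ be such that $S_r$ is atomic. Then for every $k \in \mathbb{N}$, $\mathcal{U}_k(S_r)$ is an arithmetic progression containing $k$ with difference $|\mathsf{n}(r) - \mathsf{d}(r)|$. More precisely: (1) If $r < 1$, then $\mathcal{U}_k(S_r) = \{k\}$ if $k < \mathsf{n}(r)$; $\mathcal{U}_k(S_r) = \{k + j(\mathsf{d}(r) - \mathsf{n}(r)) : j \in \mathbb{N}_0\}$ if $\mathsf{n}(r) \le k < \mathsf{d}(r)$; and $\mathcal{U}_k(S_r) = \{k + j(\mathsf{d}(r) - \mathsf{n}(r)) : j \in \mathbb{Z}, j \ge \ell\}$ for some negative integer $\ell$ if $k \ge \mathsf{d}(r)$. (2) If $r \in \mathbb{Q}_{>1} \setminus \mathbb{N}$, then $\mathcal{U}_k(S_r) = \{k\}$ if $k < \mathsf{d}(r)$; $\mathcal{U}_k(S_r) = \{k + j(\mathsf{n}(r) - \mathsf{d}(r)) : j \in \mathbb{N}_0\}$ if $\mathsf{d}(r) \le k < \mathsf{n}(r)$; and $\mathcal{U}_k(S_r) = \{k + j(\mathsf{n}(r) - \mathsf{d}(r)) : j \in \mathbb{Z}, j \ge \ell\}$ for some negative integer $\ell$ if $k \ge \mathsf{n}(r)$. (3) If $r \in \mathbb{N}$, then $\mathcal{U}_k(S_r) = \{k\}$ for every $k \in \mathbb{N}$.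
   Context: For $q \in \mathbb{Q}_{>0}$, $\mathsf{n}(q),\mathsf{d}(q)$ are the positive coprime integers with $q = \mathsf{n}(q)/\mathsf{d}(q)$. $S_r$ is the additive submonoid of $(\mathbb{Q}_{\ge 0},+)$ generated by $\{r^n : n \in \mathbb{N}_0\}$; it is atomic exactly when $r=1$ or $\mathsf{n}(r)>1$ (then for $r \notin \mathbb{N}$ its atoms are the $r^n$, $n\in\mathbb{N}_0$; for $r \in \mathbb{N}$, $S_r=\mathbb{N}_0$). $\mathsf{L}(x)$ denotes the set of lengths of factorizations of $x$ into atoms. For $k \in \mathbb{N}$, $\mathcal{U}_k(S_r)$ is the set of $\ell \in \mathbb{N}$ for which there exist atoms $a_1,\dots,a_k,b_1,\dots,b_\ell$ with $a_1+\dots+a_k = b_1 + \dots + b_\ell$; equivalently, the union of all sets $\mathsf{L}(x)$, $x \in S_r$, containing $k$. *)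

theory Defs
  imports Complex_Main
begin

definition numr :: "rat \<Rightarrow> int" where "numr q = fst (quotient_of q)"
definition denr :: "rat \<Rightarrow> int" where "denr q = snd (quotient_of q)"

inductive_set S :: "rat \<Rightarrow> rat set" for r :: rat where
  zero: "0 \<in> S r"
| step: "x \<in> S r \<Longrightarrow> x + r ^ n \<in> S r"

text \<open>atoms of an additive submonoid M of Q_{>=0} (its only unit is 0)\<close>
definition atoms :: "rat set \<Rightarrow> rat set" where
  "atoms M = {a \<in> M. a \<noteq> 0 \<and> (\<forall>b\<in>M. \<forall>c\<in>M. a = b + c \<longrightarrow> b = 0 \<or> c = 0)}"

definition atomic :: "rat set \<Rightarrow> bool" where
  "atomic M \<longleftrightarrow> (\<forall>x\<in>M. x \<noteq> 0 \<longrightarrow> (\<exists>as. as \<noteq> [] \<and> set as \<subseteq> atoms M \<and> sum_list as = x))"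

definition U :: "nat \<Rightarrow> rat set \<Rightarrow> nat set" where
  "U k M = {l. l \<ge> 1 \<and> (\<exists>as bs. length as = k \<and> length bs = l \<and> set as \<subseteq> atoms M
              \<and> set bs \<subseteq> atoms M \<and> sum_list as = sum_list bs)}"

end

theory Submission
  imports Defs
begin


fun val :: "rat \<Rightarrow> nat list \<Rightarrow> rat" where
  "val r [] = 0"
| "val r (c#cs) = of_nat c + r * val r cs"

fun addh :: "nat \<Rightarrow> nat list \<Rightarrow> nat list" where
  "addh m [] = [m]"
| "addh m (b#bs) = (b+m)#bs"

fun incr :: "nat \<Rightarrow> nat list \<Rightarrow> nat list" where
  "incr 0 [] = [1]"
| "incr 0 (c#cs) = Suc c # cs"
| "incr (Suc e) [] = 0 # incr e []"
| "incr (Suc e) (c#cs) = c # incr e cs"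

fun exps :: "nat list \<Rightarrow> nat list" where
  "exps [] = []"
| "exps (c#cs) = replicate c 0 @ map Suc (exps cs)"

fun vadd :: "nat list \<Rightarrow> nat list \<Rightarrow> nat list" where
  "vadd [] ys = ys"
| "vadd xs [] = xs"
| "vadd (x#xs) (y#ys) = (x+y) # vadd xs ys"

fun mvu :: "nat \<Rightarrow> nat \<Rightarrow> nat \<Rightarrow> nat list \<Rightarrow> nat list" where
  "mvu n d 0 (c#cs) = (c - n) # addh d cs"
| "mvu n d (Suc i) (c#cs) = c # mvu n d i cs"
| "mvu n d i [] = []"

fun mvd :: "nat \<Rightarrow> nat \<Rightarrow> nat \<Rightarrow> nat list \<Rightarrow> nat list" where
  "mvd n d 0 (c#c'#cs) = (c + n) # (c' - d) # cs"
| "mvd n d (Suc i) (c#cs) = c # mvd n d i cs"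
| "mvd n d i cs = cs"

lemma val_addh: "val r (addh m bs) = of_nat m + val r bs"
  by (cases bs) auto

lemma sum_addh: "sum_list (addh m bs) = m + sum_list bs"
  by (cases bs) auto

lemma addh_ne: "addh m bs \<noteq> []" by (cases bs) auto
lemma hd_addh: "hd (addh m bs) \<ge> m" by (cases bs) auto

lemma val_incr: "val r (incr e cs) = val r cs + r ^ e"
  by (induction e cs rule: incr.induct) (auto simp: algebra_simps)

lemma sum_incr: "sum_list (incr e cs) = Suc (sum_list cs)"
  by (induction e cs rule: incr.induct) auto

lemma set_incr_le: "\<forall>x\<in>set (incr e []). x \<le> 1"
  by (induction e) auto

lemma val_vadd: "val r (vadd xs ys) = val r xs + val r ys"
  by (induction xs ys rule: vadd.induct) (auto simp: algebra_simps)

lemma sum_vadd: "sum_list (vadd xs ys) = sum_list xs + sum_list ys"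
  by (induction xs ys rule: vadd.induct) auto

lemma sum_map_pow_exps: "sum_list (map (\<lambda>i. r ^ i) (exps cs)) = val r cs"
proof (induction cs)
  case (Cons c cs)
  have "sum_list (map (\<lambda>i. r ^ i) (map Suc (exps cs))) = r * sum_list (map (\<lambda>i. r ^ i) (exps cs))"
    by (simp add: o_def sum_list_const_mult[symmetric])
  then show ?case using Cons by (simp add: sum_list_replicate)
qed simp

lemma length_exps: "length (exps cs) = sum_list cs"
  by (induction cs) auto

lemma exps_cnt: "\<exists>cs. val r cs = sum_list (map (\<lambda>i. r ^ i) es) \<and> sum_list cs = length es"
proof (induction es)
  case Nil
  then show ?case by (intro exI[of _ "[]"]) auto
next
  case (Cons e es)
  then obtain cs where "val r cs = sum_list (map (\<lambda>i. r ^ i) es) \<and> sum_list cs = length es" by blast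
  then show ?case by (intro exI[of _ "incr e cs"]) (auto simp: val_incr sum_incr)
qed

lemma val_nonneg: "r \<ge> 0 \<Longrightarrow> val r cs \<ge> 0"
  by (induction cs) auto

lemma val_zero: "r > 0 \<Longrightarrow> val r cs = 0 \<Longrightarrow> sum_list cs = 0"
proof (induction cs)
  case (Cons c cs)
  have "val r cs \<ge> 0" using Cons by (simp add: val_nonneg)
  with Cons.prems have "c = 0" "val r cs = 0"
    by (auto simp: add_nonneg_eq_0_iff)
  then show ?case using Cons by simp
qed simp

lemma val_pos: "r > 0 \<Longrightarrow> sum_list cs > 0 \<Longrightarrow> val r cs > 0"
  using val_zero val_nonneg by (metis less_eq_rat_def less_le_not_le order_less_irrefl)

lemma val_append: "val r (xs @ ys) = val r xs + r ^ length xs * val r ys"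
  by (induction xs) (auto simp: algebra_simps)

lemma val_pad: "val r (xs @ replicate m 0) = val r xs"
proof -
  have "val r (replicate m 0) = 0" by (induction m) auto
  then show ?thesis by (simp add: val_append)
qed

lemma val_rev: "val (inverse r) (rev xs) * r ^ length xs = r * val r xs"
proof (induction xs)
  case (Cons x xs)
  show ?case
  proof (cases "r = 0")
    case True then show ?thesis by simp
  next
    case False
    have "val (inverse r) (rev (x#xs)) * r ^ length (x#xs)
       = r * (val (inverse r) (rev xs) * r ^ length xs) + of_nat x * (inverse r ^ length xs * r ^ length xs) * r"
      by (simp add: val_append algebra_simps)
    also have "\<dots> = r * (r * val r xs) + of_nat x * r"
      using Cons False by (simp add: power_mult_distrib[symmetric])
    finally show ?thesis by (simp add: algebra_simps)
  qed
qed simp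



locale nd =
  fixes n d :: nat and r :: rat
  assumes n_pos: "n > 0" and d_pos: "d > 0" and cop: "coprime n d"
    and r_def: "r = of_nat n / of_nat d"
begin

lemma rd: "r * of_nat d = of_nat n"
  using d_pos by (simp add: r_def)

lemma r_pos: "r > 0"
  using n_pos d_pos by (simp add: r_def)

lemma IV: "length xs \<le> N \<Longrightarrow> \<exists>z::int. val r xs * of_nat d ^ N = of_int z \<and>
   (int n - int d) dvd (z - int (sum_list xs) * int d ^ N)"
proof (induction xs arbitrary: N)
  case Nil
  then show ?case by (intro exI[of _ 0]) auto
next
  case (Cons x xs)
  then obtain M where M: "N = Suc M" "length xs \<le> M" by (cases N) auto
  from Cons.IH[OF M(2)] obtain z where z: "val r xs * of_nat d ^ M = of_int z"
    "(int n - int d) dvd (z - int (sum_list xs) * int d ^ M)" by blast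
  define z' where "z' = int x * int d ^ N + int n * z"
  have "val r (x#xs) * of_nat d ^ N = of_nat x * of_nat d ^ N + (r * of_nat d) * (val r xs * of_nat d ^ M)"
    by (simp add: M algebra_simps)
  also have "\<dots> = of_int z'" by (simp add: rd z z'_def)
  finally have 1: "val r (x#xs) * of_nat d ^ N = of_int z'" .
  have "z' - int (sum_list (x#xs)) * int d ^ N = (int n - int d) * z + int d * (z - int (sum_list xs) * int d ^ M)"
    by (simp add: z'_def M algebra_simps)
  then have "(int n - int d) dvd (z' - int (sum_list (x#xs)) * int d ^ N)"
    using z(2) by simp
  with 1 show ?case by blast
qed

lemma coprime_nd_int: "coprime (int n) (int d)"
  using cop by simp

lemma coprime_diff: "coprime (int n - int d) (int d)"
proof (rule coprimeI)
  fix c assume "c dvd int n - int d" "c dvd int d"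
  then have "c dvd int n" by (metis diff_add_cancel dvd_add)
  with \<open>c dvd int d\<close> show "is_unit c" using coprime_nd_int coprime_common_divisor by blast
qed

lemma mod_lemma:
  assumes "val r cs = val r ds"
  shows "(int n - int d) dvd (int (sum_list cs) - int (sum_list ds))"
proof -
  define N where "N = max (length cs) (length ds)"
  obtain z1 where z1: "val r cs * of_nat d ^ N = of_int z1" "(int n - int d) dvd (z1 - int (sum_list cs) * int d ^ N)"
    using IV[of cs N] N_def by auto
  obtain z2 where z2: "val r ds * of_nat d ^ N = of_int z2" "(int n - int d) dvd (z2 - int (sum_list ds) * int d ^ N)"
    using IV[of ds N] N_def by auto
  have "z1 = z2" using z1(1) z2(1) assms by simp
  then have "(int n - int d) dvd ((int (sum_list cs) - int (sum_list ds)) * int d ^ N)"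
    using z1(2) z2(2) dvd_diff[OF z2(2) z1(2)] by (simp add: algebra_simps)
  moreover have "coprime (int n - int d) (int d ^ N)" using coprime_diff by simp
  ultimately show ?thesis using coprime_dvd_mult_left_iff by blast
qed

lemma head_dvd:
  assumes "val r (a#A) = val r (b#B)"
  shows "\<exists>k::int. int b = int a + int n * k \<and> val r A = of_int (int d * k) + val r B"
proof -
  define N where "N = max (length A) (length B)"
  obtain z1 where z1: "val r A * of_nat d ^ N = of_int z1"
    using IV[of A N] N_def by auto
  obtain z2 where z2: "val r B * of_nat d ^ N = of_int z2"
    using IV[of B N] N_def by auto
  have "(of_nat a + r * val r A) * of_nat d ^ Suc N = (of_nat b + r * val r B) * of_nat d ^ Suc N"
    using assms by simp
  then have "of_nat a * of_nat d ^ Suc N + (r * of_nat d) * (val r A * of_nat d ^ N)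
        = of_nat b * of_nat d ^ Suc N + (r * of_nat d) * (val r B * of_nat d ^ N)"
    by (simp add: algebra_simps)
  then have "of_int (int a * int d ^ Suc N + int n * z1) = (of_int (int b * int d ^ Suc N + int n * z2) :: rat)"
    by (simp add: rd z1 z2)
  then have e: "int a * int d ^ Suc N + int n * z1 = int b * int d ^ Suc N + int n * z2"
    using of_int_eq_iff by blast
  then have e2: "(int b - int a) * int d ^ Suc N = int n * (z1 - z2)"
    by (simp add: algebra_simps)
  have "int n dvd int n * (z1 - z2)" by simp
  then have "int n dvd (int b - int a) * int d ^ Suc N" by (simp only: e2)
  moreover have "coprime (int n) (int d ^ Suc N)" using coprime_nd_int by simp
  ultimately have "int n dvd (int b - int a)" using coprime_dvd_mult_left_iff by blast
  then obtain k where k: "int b - int a = int n * k" by (auto simp: dvd_def)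
  have kb: "(of_nat b :: rat) = of_nat a + of_nat n * of_int k"
  proof -
    have "(of_int (int b) :: rat) = of_int (int a + int n * k)" using k by (simp add: algebra_simps)
    then show ?thesis by simp
  qed
  have "r * val r A = of_nat n * of_int k + r * val r B"
    using assms kb by simp
  also have "\<dots> = r * (of_int (int d * k) + val r B)"
    using rd by (simp add: algebra_simps)
  finally have "val r A = of_int (int d * k) + val r B" using r_pos by simp
  with k show ?thesis by (intro exI[of _ k]) auto
qed

lemma k_nonneg:
  assumes "int b = int a + int n * k" "a < n"
  shows "k \<ge> 0"
proof (rule ccontr)
  assume "\<not> k \<ge> 0"
  then have "k \<le> -1" by simp
  then have "int n * k \<le> int n * (-1)" by (rule mult_left_mono) simp
  then show False using assms by simp
qed

lemma uq:
  assumes "m \<le> n" "m \<le> d"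
  shows "(\<forall>x\<in>set as. x < m) \<Longrightarrow> val r as = val r bs \<Longrightarrow>
     sum_list as = sum_list bs \<and> (as \<noteq> [] \<longrightarrow> bs \<noteq> [] \<longrightarrow> hd as = hd bs)"
proof (induction as arbitrary: bs)
  case Nil
  then show ?case using val_zero[OF r_pos, of bs] by simp
next
  case (Cons a A)
  show ?case
  proof (cases bs)
    case Nil
    then show ?thesis using val_zero[OF r_pos, of "a#A"] Cons.prems by simp
  next
    case (Cons b B)
    from head_dvd[of a A b B] Cons.prems \<open>bs = b # B\<close> obtain k where
      k: "int b = int a + int n * k" "val r A = of_int (int d * k) + val r B" by auto
    have "a < n" using Cons.prems assms by auto
    then have "k \<ge> 0" using k_nonneg k(1) by blast
    then obtain kk where kk: "k = int kk" using nonneg_int_cases by blast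
    have "val r A = val r (addh (d*kk) B)" using k(2) kk by (simp add: val_addh)
    from Cons.IH[OF _ this] Cons.prems have IH: "sum_list A = d*kk + sum_list B"
      "A \<noteq> [] \<longrightarrow> hd A = hd (addh (d*kk) B)"
      by (auto simp: sum_addh addh_ne)
    have "kk = 0"
    proof (cases "A = []")
      case True then show ?thesis using IH d_pos by simp
    next
      case False
      then have "hd A \<in> set A" by simp
      then have "hd A < d" using Cons.prems assms by auto
      moreover have "hd A \<ge> d * kk" using IH False hd_addh by metis
      ultimately show ?thesis by (cases kk) auto
    qed
    then show ?thesis using IH k kk \<open>bs = b # B\<close> by simp
  qed
qed

lemma low:
  assumes "d \<le> n"
  shows "(\<forall>x\<in>set as. x < n) \<Longrightarrow> val r as = val r bs \<Longrightarrow> sum_list as \<le> sum_list bs"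
proof (induction as arbitrary: bs)
  case Nil
  then show ?case by simp
next
  case (Cons a A)
  show ?case
  proof (cases bs)
    case Nil
    then show ?thesis using val_zero[OF r_pos, of "a#A"] Cons.prems by simp
  next
    case (Cons b B)
    from head_dvd[of a A b B] Cons.prems \<open>bs = b # B\<close> obtain k where
      k: "int b = int a + int n * k" "val r A = of_int (int d * k) + val r B" by auto
    have "a < n" using Cons.prems assms by auto
    then have "k \<ge> 0" using k_nonneg k(1) by blast
    then obtain kk where kk: "k = int kk" using nonneg_int_cases by blast
    have "val r A = val r (addh (d*kk) B)" using k(2) kk by (simp add: val_addh)
    from Cons.IH[OF _ this] Cons.prems have IH: "sum_list A \<le> d*kk + sum_list B"
      by (auto simp: sum_addh)
    have dk: "d * kk \<le> n * kk" using assms by (rule mult_right_mono) simp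
    have "int b = int (a + n*kk)" using k kk by simp
    then have "b = a + n*kk" by (simp only: of_nat_eq_iff)
    then have "sum_list bs = a + n*kk + sum_list B" using \<open>bs = b # B\<close> by simp
    moreover have "sum_list (a#A) = a + sum_list A" by simp
    ultimately show ?thesis using IH dk by linarith
  qed
qed

lemma mvu:
  "i < length cs \<Longrightarrow> cs ! i \<ge> n \<Longrightarrow>
   val r (mvu n d i cs) = val r cs \<and> sum_list (mvu n d i cs) + n = sum_list cs + d
     \<and> Suc i < length (mvu n d i cs) \<and> mvu n d i cs ! Suc i \<ge> d"
proof (induction cs arbitrary: i)
  case Nil then show ?case by simp
next
  case (Cons c cs)
  show ?case
  proof (cases i)
    case 0
    then have "c \<ge> n" using Cons.prems by simp
    then have "(of_nat (c - n) :: rat) = of_nat c - of_nat n" by simp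
    moreover have "length (addh d cs) > 0" using addh_ne by blast
    ultimately show ?thesis using 0 \<open>c \<ge> n\<close> rd hd_addh[of d cs]
      by (auto simp: val_addh sum_addh algebra_simps hd_conv_nth[OF addh_ne])
  next
    case (Suc j)
    then show ?thesis using Cons by auto
  qed
qed

lemma mvd:
  "Suc i < length cs \<Longrightarrow> cs ! Suc i \<ge> d \<Longrightarrow>
   val r (mvd n d i cs) = val r cs \<and> sum_list (mvd n d i cs) + d = sum_list cs + n"
proof (induction cs arbitrary: i)
  case Nil then show ?case by simp
next
  case (Cons c cs)
  show ?case
  proof (cases i)
    case 0
    then obtain c' cs' where cs: "cs = c' # cs'" using Cons.prems by (cases cs) auto
    then have "c' \<ge> d" using Cons.prems 0 by simp
    then have "(of_nat (c' - d) :: rat) = of_nat c' - of_nat d" by simp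
    then show ?thesis using 0 cs \<open>c' \<ge> d\<close> rd
      by (auto simp: algebra_simps)
  next
    case (Suc j)
    then show ?thesis using Cons by auto
  qed
qed

lemma gen:
  assumes "n \<le> d" "k \<ge> n"
  shows "\<exists>ds. val r ds = of_nat k \<and> sum_list ds + t*n = k + t*d \<and> (\<exists>i<length ds. ds!i \<ge> n)"
proof (induction t)
  case 0
  then show ?case using assms by (intro exI[of _ "[k]"]) auto
next
  case (Suc t)
  then obtain ds i where ds: "val r ds = of_nat k" "sum_list ds + t*n = k + t*d" "i < length ds" "ds!i \<ge> n"
    by blast
  from mvu[OF ds(3,4)] show ?case using ds assms
    by (intro exI[of _ "mvu n d i ds"]) auto
qed

end


lemma pad_pair: "\<exists>xs' ys'. length xs' = length ys' \<and> val s xs' = val s xs \<and> val s ys' = val s ys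
   \<and> sum_list xs' = sum_list xs \<and> sum_list ys' = sum_list ys
   \<and> set xs' \<subseteq> insert 0 (set xs) \<and> set ys' \<subseteq> insert 0 (set ys)"
proof -
  define L where "L = max (length xs) (length ys)"
  show ?thesis
    by (intro exI[of _ "xs @ replicate (L - length xs) 0"] exI[of _ "ys @ replicate (L - length ys) 0"])
       (auto simp: L_def val_pad)
qed

lemma rev_eq: "length xs = length ys \<Longrightarrow> val s xs = val s ys \<Longrightarrow> s \<noteq> 0 \<Longrightarrow>
  val (inverse s) (rev xs) = val (inverse s) (rev ys)"
proof -
  assume a: "length xs = length ys" "val s xs = val s ys" "s \<noteq> 0"
  have "val (inverse s) (rev xs) * s ^ length xs = val (inverse s) (rev ys) * s ^ length xs"
    using val_rev[of s xs] val_rev[of s ys] a by simp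
  then show ?thesis using a(3) by simp
qed

context nd begin

lemma inv_nd: "nd d n (inverse r)"
  using n_pos d_pos cop by unfold_locales (auto simp: r_def coprime_commute)

lemma low_lt:
  assumes "n \<le> d" "\<forall>x\<in>set cs. x < d" "val r cs = val r ds"
  shows "sum_list cs \<le> sum_list ds"
proof -
  interpret inv: nd d n "inverse r" by (rule inv_nd)
  obtain cs' ds' where p: "length cs' = length ds'" "val r cs' = val r cs" "val r ds' = val r ds"
    "sum_list cs' = sum_list cs" "sum_list ds' = sum_list ds" "set cs' \<subseteq> insert 0 (set cs)"
    using pad_pair[of r cs ds] by blast
  have "val (inverse r) (rev cs') = val (inverse r) (rev ds')"
    using rev_eq[OF p(1)] p assms r_pos by simp
  moreover have "\<forall>x\<in>set (rev cs'). x < d" using p(6) assms d_pos by auto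
  ultimately have "sum_list (rev cs') \<le> sum_list (rev ds')"
    using inv.low[OF assms(1)] by blast
  then show ?thesis using p by simp
qed

lemma gen_gt:
  assumes "d \<le> n" "k \<ge> d"
  shows "\<exists>cs ds. sum_list cs = k \<and> sum_list ds + t*d = k + t*n \<and> val r cs = val r ds"
proof -
  interpret inv: nd d n "inverse r" by (rule inv_nd)
  obtain ds where ds: "val (inverse r) ds = of_nat k" "sum_list ds + t*d = k + t*n"
    using inv.gen[OF assms] by blast
  obtain cs' ds' where p: "length cs' = length ds'" "val (inverse r) cs' = val (inverse r) [k]"
    "val (inverse r) ds' = val (inverse r) ds"
    "sum_list cs' = sum_list [k]" "sum_list ds' = sum_list ds"
    using pad_pair[of "inverse r" "[k]" ds] by blast
  have "val (inverse (inverse r)) (rev cs') = val (inverse (inverse r)) (rev ds')"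
    using rev_eq[OF p(1), of "inverse r"] p ds r_pos by simp
  then show ?thesis using p ds
    by (intro exI[of _ "rev cs'"] exI[of _ "rev ds'"]) simp
qed

end


lemma sum_pow_in_S: "sum_list (map (\<lambda>i. r ^ i) es) \<in> S r"
proof (induction es)
  case Nil then show ?case by (simp add: S.zero)
next
  case (Cons e es)
  then show ?case using S.step[OF Cons, of e] by (simp add: add.commute)
qed

lemma S_val: "x \<in> S r \<longleftrightarrow> (\<exists>cs. x = val r cs)"
proof
  assume "x \<in> S r"
  then show "\<exists>cs. x = val r cs"
  proof (induction rule: S.induct)
    case zero then show ?case by (intro exI[of _ "[]"]) simp
  next
    case (step x n)
    then obtain cs where "x = val r cs" by blast
    then show ?case by (intro exI[of _ "incr n cs"]) (simp add: val_incr)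
  qed
next
  assume "\<exists>cs. x = val r cs"
  then obtain cs where "x = val r cs" by blast
  then show "x \<in> S r" using sum_pow_in_S[of r "exps cs"] by (simp add: sum_map_pow_exps)
qed

lemma atom_pow: "r > 0 \<Longrightarrow> a \<in> atoms (S r) \<Longrightarrow> \<exists>m. a = r ^ m"
proof -
  assume r: "r > 0" and a: "a \<in> atoms (S r)"
  then have aS: "a \<in> S r" "a \<noteq> 0" and at: "\<forall>b\<in>S r. \<forall>c\<in>S r. a = b + c \<longrightarrow> b = 0 \<or> c = 0"
    by (auto simp: atoms_def)
  from aS show ?thesis
  proof (cases rule: S.cases)
    case zero then show ?thesis using aS by simp
  next
    case (step x m)
    have "r ^ m \<in> S r" using S.step[OF S.zero, of r m] by simp
    then have "x = 0" using at step r by auto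
    then show ?thesis using step by auto
  qed
qed

lemma bridge:
  assumes "atoms (S r) = range (\<lambda>i. r ^ i)"
  shows "U k (S r) = {l. l \<ge> 1 \<and> (\<exists>cs ds. sum_list cs = k \<and> sum_list ds = l \<and> val r cs = val r ds)}"
proof (intro set_eqI iffI)
  fix l assume "l \<in> U k (S r)"
  then obtain as bs where ab: "l \<ge> 1" "length as = k" "length bs = l" "set as \<subseteq> atoms (S r)"
    "set bs \<subseteq> atoms (S r)" "sum_list as = sum_list bs" by (auto simp: U_def)
  obtain es where es: "as = map (\<lambda>i. r ^ i) es" using ab(4) assms ex_map_conv[of as "\<lambda>i. r ^ i"] by auto
  obtain fs where fs: "bs = map (\<lambda>i. r ^ i) fs" using ab(5) assms ex_map_conv[of bs "\<lambda>i. r ^ i"] by auto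
  obtain cs where cs: "val r cs = sum_list (map (\<lambda>i. r ^ i) es)" "sum_list cs = length es"
    using exps_cnt by blast
  obtain ds where ds: "val r ds = sum_list (map (\<lambda>i. r ^ i) fs)" "sum_list ds = length fs"
    using exps_cnt by blast
  show "l \<in> {l. l \<ge> 1 \<and> (\<exists>cs ds. sum_list cs = k \<and> sum_list ds = l \<and> val r cs = val r ds)}"
    using ab es fs cs ds by (intro CollectI conjI exI[of _ cs] exI[of _ ds]) auto
next
  fix l assume "l \<in> {l. l \<ge> 1 \<and> (\<exists>cs ds. sum_list cs = k \<and> sum_list ds = l \<and> val r cs = val r ds)}"
  then obtain cs ds where h: "l \<ge> 1" "sum_list cs = k" "sum_list ds = l" "val r cs = val r ds" by auto
  show "l \<in> U k (S r)" unfolding U_def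
    using h assms
    by (intro CollectI conjI exI[of _ "map (\<lambda>i. r ^ i) (exps cs)"] exI[of _ "map (\<lambda>i. r ^ i) (exps ds)"])
       (auto simp: length_exps sum_map_pow_exps)
qed

lemma nat_in_S: "of_nat j \<in> S r"
proof (induction j)
  case 0 then show ?case by (simp add: S.zero)
next
  case (Suc j) then show ?case using S.step[OF Suc, of 0] by (simp add: add.commute)
qed

lemma S_nat: "x \<in> S r \<Longrightarrow> r \<in> \<nat> \<Longrightarrow> x \<in> \<nat>"
proof (induction rule: S.induct)
  case (step x n)
  then obtain q where "r = of_nat q" by (auto elim: Nats_cases)
  then have "r ^ n \<in> \<nat>" by (simp add: of_nat_power[symmetric] del: of_nat_power)
  then show ?case using step by (auto intro: Nats_add)
qed (simp)

lemma atoms_int: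
  assumes "r = of_nat q" "q \<ge> 1"
  shows "atoms (S r) = {1}"
proof (intro set_eqI iffI)
  fix a assume a: "a \<in> atoms (S r)"
  then obtain m where m: "a = r ^ m" using atom_pow assms by fastforce
  then have am: "a = of_nat (q ^ m)" using assms by simp
  have at: "\<forall>b\<in>S r. \<forall>c\<in>S r. a = b + c \<longrightarrow> b = 0 \<or> c = 0" using a by (auto simp: atoms_def)
  have "q ^ m \<ge> 1" using assms by simp
  show "a \<in> {1}"
  proof (cases "q ^ m = 1")
    case True then show ?thesis by (simp only: am True of_nat_1) simp
  next
    case False
    then have "q ^ m \<ge> 2" using \<open>q ^ m \<ge> 1\<close> by linarith
    have "a = of_nat 1 + of_nat (q ^ m - 1)" using am \<open>q ^ m \<ge> 2\<close> by (simp add: of_nat_diff)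
    moreover have "q ^ m - 1 \<noteq> 0" using \<open>q ^ m \<ge> 2\<close> by linarith
    then have "(of_nat (q ^ m - 1) :: rat) \<noteq> 0" by (metis of_nat_eq_0_iff)
    ultimately show ?thesis using at nat_in_S[of 1 r] nat_in_S[of "q^m - 1" r] by auto
  qed
next
  fix a assume "a \<in> {1::rat}"
  then have a1: "a = 1" by simp
  have "1 \<in> S r" using nat_in_S[of 1 r] by simp
  moreover have "\<forall>b\<in>S r. \<forall>c\<in>S r. 1 = b + c \<longrightarrow> b = 0 \<or> c = 0"
  proof (intro ballI impI)
    fix b c assume "b \<in> S r" "c \<in> S r" "(1::rat) = b + c"
    then have "b \<in> \<nat>" "c \<in> \<nat>" using S_nat assms by auto
    then obtain p q' where "b = of_nat p" "c = of_nat q'" by (auto elim!: Nats_cases)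
    then have "p + q' = 1" using \<open>1 = b + c\<close> by (metis of_nat_1 of_nat_add of_nat_eq_iff)
    then show "b = 0 \<or> c = 0" using \<open>b = of_nat p\<close> \<open>c = of_nat q'\<close> by (cases p) auto
  qed
  ultimately show "a \<in> atoms (S r)" using a1 by (simp add: atoms_def)
qed

lemma sum_ones: "set as \<subseteq> {1::rat} \<Longrightarrow> sum_list as = of_nat (length as)"
  by (induction as) auto

lemma U_int:
  assumes "r = of_nat q" "q \<ge> 1" "k \<ge> 1"
  shows "U k (S r) = {k}"
proof -
  have A: "atoms (S r) = {1}" using atoms_int assms by blast
  show ?thesis
  proof (intro set_eqI iffI)
    fix l assume "l \<in> U k (S r)"
    then obtain as bs :: "rat list" where "length as = k" "length bs = l" "set as \<subseteq> {1}" "set bs \<subseteq> {1}"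
      "sum_list as = sum_list bs" by (auto simp: U_def A)
    then have "(of_nat k :: rat) = of_nat l" using sum_ones by metis
    then show "l \<in> {k}" by simp
  next
    fix l assume "l \<in> {k}"
    then show "l \<in> U k (S r)" unfolding U_def A using assms(3)
      by (intro CollectI conjI exI[of _ "replicate k (1::rat)"]) auto
  qed
qed



lemma prog_nat:
  fixes V :: "nat set" and g k :: nat
  assumes "g > 0" "\<forall>l\<in>V. int g dvd (int l - int k)" "\<forall>l\<in>V. l \<ge> k" "\<forall>t. k + t*g \<in> V"
  shows "int ` V = {int k + int j * int g | j. True}"
proof (intro set_eqI iffI)
  fix y assume "y \<in> int ` V"
  then obtain l where l: "l \<in> V" "y = int l" by blast
  then have "l \<ge> k" "int g dvd (int l - int k)" using assms by auto
  then have "g dvd (l - k)" by (metis of_nat_diff int_dvd_int_iff)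
  then obtain j where "l - k = g * j" by (auto simp: dvd_def)
  then have "y = int k + int j * int g" using l \<open>l \<ge> k\<close>
    by (metis add_diff_inverse_nat mult.commute not_less of_nat_add of_nat_mult)
  then show "y \<in> {int k + int j * int g | j. True}" by blast
next
  fix y assume "y \<in> {int k + int j * int g | j. True}"
  then obtain j where "y = int (k + j * g)" by auto
  then show "y \<in> int ` V" using assms(4) by blast
qed

lemma prog_int:
  fixes V :: "nat set" and g k :: nat
  assumes "g > 0" "\<forall>l\<in>V. int g dvd (int l - int k)" "k - g \<in> V" "g \<le> k" "\<forall>l\<in>V. l + g \<in> V"
  shows "\<exists>l::int. l < 0 \<and> int ` V = {int k + j * int g | j. j \<ge> l}"
proof -
  define m0 where "m0 = (LEAST x. x \<in> V)"
  have m0V: "m0 \<in> V" unfolding m0_def using assms(3) by (rule LeastI)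
  have m0le: "\<And>x. x \<in> V \<Longrightarrow> m0 \<le> x" unfolding m0_def by (rule Least_le)
  have "m0 \<le> k - g" using m0le assms(3) by blast
  obtain l where l: "int m0 - int k = int g * l" using assms(2) m0V by (auto simp: dvd_def)
  have "int g * l < 0" using l \<open>m0 \<le> k - g\<close> assms(1,4) by linarith
  then have "l < 0" using assms(1) by (simp add: mult_less_0_iff)
  have iter: "\<And>t. m0 + t*g \<in> V"
  proof -
    fix t show "m0 + t*g \<in> V"
    proof (induction t)
      case (Suc t)
      then have "m0 + t*g + g \<in> V" using assms(5) by blast
      then show ?case by (simp add: algebra_simps)
    qed (use m0V in simp)
  qed
  have "int ` V = {int k + j * int g | j. j \<ge> l}"
  proof (intro set_eqI iffI)
    fix y assume "y \<in> int ` V"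
    then obtain x where x: "x \<in> V" "y = int x" by blast
    obtain j where j: "int x - int k = int g * j" using assms(2) x by (auto simp: dvd_def)
    have "int g * l \<le> int g * j" using j l m0le[OF x(1)] by linarith
    then have "l \<le> j" using assms(1) by simp
    moreover have "y = int k + j * int g" using x j by (simp add: algebra_simps)
    ultimately show "y \<in> {int k + j * int g | j. j \<ge> l}" by blast
  next
    fix y assume "y \<in> {int k + j * int g | j. j \<ge> l}"
    then obtain j where j: "y = int k + j * int g" "j \<ge> l" by blast
    define t where "t = nat (j - l)"
    have "int t = j - l" using j(2) t_def by simp
    then have "j = l + int t" by simp
    then have "y = int (m0 + t * g)" using j l by (simp add: algebra_simps)
    then show "y \<in> int ` V" using iter by blast
  qed
  then show ?thesis using \<open>l < 0\<close> by blast
qed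

lemma sum_zero_val: "sum_list cs = 0 \<Longrightarrow> val r cs = 0"
  by (induction cs) auto

lemma val_shift: "val r (replicate j 0 @ [x]) = r ^ j * of_nat x"
  by (simp add: val_append val_pad[of r "[]", simplified])

context nd begin

lemma atoms_nd:
  assumes "n \<ge> 2" "d \<ge> 2"
  shows "atoms (S r) = range (\<lambda>i. r ^ i)"
proof (intro set_eqI iffI)
  fix a assume "a \<in> atoms (S r)"
  then show "a \<in> range (\<lambda>i. r ^ i)" using atom_pow[OF r_pos] by blast
next
  fix a assume "a \<in> range (\<lambda>i. r ^ i)"
  then obtain i where a: "a = r ^ i" by blast
  have aS: "a \<in> S r" using S_val[of a r] a val_incr[of r i "[]"] by (metis add_0 val.simps(1))
  have a0: "a \<noteq> 0" using a r_pos by simp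
  have "\<forall>b\<in>S r. \<forall>c\<in>S r. a = b + c \<longrightarrow> b = 0 \<or> c = 0"
  proof (intro ballI impI)
    fix b c assume bc: "b \<in> S r" "c \<in> S r" "a = b + c"
    show "b = 0 \<or> c = 0"
    proof (rule ccontr)
      assume nz: "\<not> (b = 0 \<or> c = 0)"
      obtain cs1 where cs1: "b = val r cs1" using bc(1) S_val by blast
      obtain cs2 where cs2: "c = val r cs2" using bc(2) S_val by blast
      have "sum_list cs1 \<noteq> 0" using nz cs1 sum_zero_val by blast
      moreover have "sum_list cs2 \<noteq> 0" using nz cs2 sum_zero_val by blast
      moreover have "val r (incr i []) = val r (vadd cs1 cs2)"
        using a bc(3) cs1 cs2 by (simp add: val_incr val_vadd)
      moreover have "\<forall>x\<in>set (incr i []). x < 2" using set_incr_le[of i] by fastforce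
      ultimately have "sum_list (incr i []) = sum_list (vadd cs1 cs2)"
        using uq[of 2 "incr i []" "vadd cs1 cs2"] assms by blast
      then show False using \<open>sum_list cs1 \<noteq> 0\<close> \<open>sum_list cs2 \<noteq> 0\<close> by (simp add: sum_incr sum_vadd)
    qed
  qed
  then show "a \<in> atoms (S r)" using aS a0 by (simp add: atoms_def)
qed

lemma not_atomic1:
  assumes "n = 1" "d \<ge> 2"
  shows "\<not> atomic (S r)"
proof -
  have "atoms (S r) = {}"
  proof (rule ccontr)
    assume "atoms (S r) \<noteq> {}"
    then obtain a where a: "a \<in> atoms (S r)" by blast
    then obtain m where m: "a = r ^ m" using atom_pow[OF r_pos] by blast
    have at: "\<forall>b\<in>S r. \<forall>c\<in>S r. a = b + c \<longrightarrow> b = 0 \<or> c = 0" using a by (auto simp: atoms_def)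
    have rd1: "r * of_nat d = 1" using rd assms by simp
    have "a = r ^ Suc m * of_nat d" using m rd1 by (simp add: mult.assoc)
    also have "\<dots> = r ^ Suc m + r ^ Suc m * of_nat (d - 1)" using assms by (simp add: of_nat_diff algebra_simps)
    finally have e: "a = val r (replicate (Suc m) 0 @ [1]) + val r (replicate (Suc m) 0 @ [d - 1])"
      by (simp only: val_shift)
    have "val r (replicate (Suc m) 0 @ [1]) \<noteq> 0" using r_pos by (simp only: val_shift) simp
    moreover have "val r (replicate (Suc m) 0 @ [d - 1]) \<noteq> 0" using r_pos assms by (simp only: val_shift) simp
    ultimately show False using at e S_val by blast
  qed
  moreover have "(1::rat) \<in> S r" using nat_in_S[of 1 r] by simp
  ultimately show ?thesis unfolding atomic_def by fastforce
qed

end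


context nd begin

lemma caseA:
  assumes "2 \<le> n" "n < d" "k \<ge> 1"
  shows "(k < n \<longrightarrow> U k (S r) = {k})
    \<and> (n \<le> k \<and> k < d \<longrightarrow> int ` U k (S r) = {int k + int j * int (d - n) | j. True})
    \<and> (d \<le> k \<longrightarrow> (\<exists>l::int. l < 0 \<and> int ` U k (S r) = {int k + j * int (d - n) | j. j \<ge> l}))"
proof -
  define V where "V = U k (S r)"
  have br: "V = {l. l \<ge> 1 \<and> (\<exists>cs ds. sum_list cs = k \<and> sum_list ds = l \<and> val r cs = val r ds)}"
    unfolding V_def using bridge[OF atoms_nd] assms by simp
  have inV: "\<And>l cs ds. l \<ge> 1 \<Longrightarrow> sum_list cs = k \<Longrightarrow> sum_list ds = l \<Longrightarrow> val r cs = val r ds \<Longrightarrow> l \<in> V"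
    using br by blast
  have fromV: "\<And>l. l \<in> V \<Longrightarrow> \<exists>cs ds. sum_list cs = k \<and> sum_list ds = l \<and> val r cs = val r ds"
    using br by blast
  have modV: "\<forall>l\<in>V. int (d - n) dvd (int l - int k)"
  proof
    fix l assume "l \<in> V"
    then obtain cs ds where h: "sum_list cs = k" "sum_list ds = l" "val r cs = val r ds" using fromV by blast
    have "(int n - int d) dvd (int k - int l)" using mod_lemma[OF h(3)] h by simp
    then obtain q where q: "int k - int l = (int n - int d) * q" by (auto simp: dvd_def)
    have "int l - int k = int (d - n) * q" using q assms by (simp add: algebra_simps)
    then show "int (d - n) dvd (int l - int k)" by simp
  qed
  have kV: "k \<in> V" using inV[of k "[k]" "[k]"] assms by simp
  have uqV: "\<And>l cs ds. sum_list cs = k \<Longrightarrow> sum_list ds = l \<Longrightarrow> val r cs = val r ds \<Longrightarrow> \<forall>x\<in>set ds. x < n \<Longrightarrow> l = k"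
    using uq[of n] assms by (metis less_imp_le order_refl)
  have genV: "\<And>t. k \<ge> n \<Longrightarrow> k + t * (d - n) \<in> V"
  proof -
    fix t assume "k \<ge> n"
    obtain ds where ds: "val r ds = of_nat k" "sum_list ds + t*n = k + t*d"
      using gen[of k t] assms \<open>k \<ge> n\<close> by auto
    have "sum_list ds = k + t * (d - n)" using ds(2) assms by (simp add: diff_mult_distrib2)
    then show "k + t * (d - n) \<in> V" using inV[of _ "[k]" ds] ds assms by simp
  qed
  have P1: "k < n \<longrightarrow> V = {k}"
  proof
    assume "k < n"
    have "\<And>l. l \<in> V \<Longrightarrow> l = k"
    proof -
      fix l assume "l \<in> V"
      then obtain cs ds where h: "sum_list cs = k" "sum_list ds = l" "val r cs = val r ds" using fromV by blast
      have "\<forall>x\<in>set cs. x < n" using h(1) \<open>k < n\<close> member_le_sum_list[of _ cs] by fastforce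
      then have "sum_list cs = sum_list ds" using uq[of n cs ds] assms h(3) by simp
      then show "l = k" using h by simp
    qed
    then show "V = {k}" using kV by blast
  qed
  have P2: "n \<le> k \<and> k < d \<longrightarrow> int ` V = {int k + int j * int (d - n) | j. True}"
  proof
    assume k: "n \<le> k \<and> k < d"
    have "\<forall>l\<in>V. l \<ge> k"
    proof
      fix l assume "l \<in> V"
      then obtain cs ds where h: "sum_list cs = k" "sum_list ds = l" "val r cs = val r ds" using fromV by blast
      have "\<forall>x\<in>set cs. x < d" using h(1) k member_le_sum_list[of _ cs] by fastforce
      then show "l \<ge> k" using low_lt[of cs ds] assms h by simp
    qed
    then show "int ` V = {int k + int j * int (d - n) | j. True}"
      using prog_nat[of "d - n" V k] modV genV k assms by simp
  qed
  have P3: "d \<le> k \<longrightarrow> (\<exists>l::int. l < 0 \<and> int ` V = {int k + j * int (d - n) | j. j \<ge> l})"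
  proof
    assume k: "d \<le> k"
    have "val r [0, k] = val r [n, k - d]"
      using k rd by (simp add: of_nat_diff algebra_simps)
    then have down: "k - (d - n) \<in> V" using inV[of "k - (d - n)" "[0,k]" "[n, k-d]"] k assms by simp
    have clos: "\<forall>l\<in>V. l + (d - n) \<in> V"
    proof
      fix l assume "l \<in> V"
      then obtain cs ds where h: "sum_list cs = k" "sum_list ds = l" "val r cs = val r ds" using fromV by blast
      show "l + (d - n) \<in> V"
      proof (cases "\<exists>i<length ds. ds!i \<ge> n")
        case True
        then obtain i where i: "i < length ds" "ds!i \<ge> n" by blast
        from mvu[OF i] have "val r (mvu n d i ds) = val r ds" "sum_list (mvu n d i ds) + n = l + d"
          using h by auto
        then show ?thesis using inV[of "l + (d - n)" cs "mvu n d i ds"] h assms by simp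
      next
        case False
        then have "\<forall>x\<in>set ds. x < n" by (metis in_set_conv_nth not_less)
        then have "l = k" using uqV h by blast
        then show ?thesis using genV[of 1] k assms by simp
      qed
    qed
    show "\<exists>l::int. l < 0 \<and> int ` V = {int k + j * int (d - n) | j. j \<ge> l}"
      using prog_int[of "d - n" V k] modV down clos k assms by simp
  qed
  show ?thesis using P1 P2 P3 unfolding V_def by blast
qed

lemma caseB:
  assumes "2 \<le> d" "d < n" "k \<ge> 1"
  shows "(k < d \<longrightarrow> U k (S r) = {k})
    \<and> (d \<le> k \<and> k < n \<longrightarrow> int ` U k (S r) = {int k + int j * int (n - d) | j. True})
    \<and> (n \<le> k \<longrightarrow> (\<exists>l::int. l < 0 \<and> int ` U k (S r) = {int k + j * int (n - d) | j. j \<ge> l}))"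
proof -
  define V where "V = U k (S r)"
  have br: "V = {l. l \<ge> 1 \<and> (\<exists>cs ds. sum_list cs = k \<and> sum_list ds = l \<and> val r cs = val r ds)}"
    unfolding V_def using bridge[OF atoms_nd] assms by simp
  have inV: "\<And>l cs ds. l \<ge> 1 \<Longrightarrow> sum_list cs = k \<Longrightarrow> sum_list ds = l \<Longrightarrow> val r cs = val r ds \<Longrightarrow> l \<in> V"
    using br by blast
  have fromV: "\<And>l. l \<in> V \<Longrightarrow> \<exists>cs ds. sum_list cs = k \<and> sum_list ds = l \<and> val r cs = val r ds"
    using br by blast
  have modV: "\<forall>l\<in>V. int (n - d) dvd (int l - int k)"
  proof
    fix l assume "l \<in> V"
    then obtain cs ds where h: "sum_list cs = k" "sum_list ds = l" "val r cs = val r ds" using fromV by blast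
    have "(int n - int d) dvd (int k - int l)" using mod_lemma[OF h(3)] h by simp
    then obtain q where q: "int k - int l = (int n - int d) * q" by (auto simp: dvd_def)
    have "int l - int k = int (n - d) * (- q)" using q assms by (simp add: algebra_simps)
    then show "int (n - d) dvd (int l - int k)" by simp
  qed
  have kV: "k \<in> V" using inV[of k "[k]" "[k]"] assms by simp
  have uqV: "\<And>l cs ds. sum_list cs = k \<Longrightarrow> sum_list ds = l \<Longrightarrow> val r cs = val r ds \<Longrightarrow> \<forall>x\<in>set ds. x < d \<Longrightarrow> l = k"
    using uq[of d] assms by (metis less_imp_le order_refl)
  have genV: "\<And>t. k \<ge> d \<Longrightarrow> k + t * (n - d) \<in> V"
  proof -
    fix t assume "k \<ge> d"
    obtain cs ds where ds: "sum_list cs = k" "sum_list ds + t*d = k + t*n" "val r cs = val r ds"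
      using gen_gt[of k t] assms \<open>k \<ge> d\<close> by auto
    have "sum_list ds = k + t * (n - d)" using ds(2) assms by (simp add: diff_mult_distrib2)
    then show "k + t * (n - d) \<in> V" using inV[of _ cs ds] ds assms by simp
  qed
  have P1: "k < d \<longrightarrow> V = {k}"
  proof
    assume "k < d"
    have "\<And>l. l \<in> V \<Longrightarrow> l = k"
    proof -
      fix l assume "l \<in> V"
      then obtain cs ds where h: "sum_list cs = k" "sum_list ds = l" "val r cs = val r ds" using fromV by blast
      have "\<forall>x\<in>set cs. x < d" using h(1) \<open>k < d\<close> member_le_sum_list[of _ cs] by fastforce
      then have "sum_list cs = sum_list ds" using uq[of d cs ds] assms h(3) by simp
      then show "l = k" using h by simp
    qed
    then show "V = {k}" using kV by blast
  qed
  have P2: "d \<le> k \<and> k < n \<longrightarrow> int ` V = {int k + int j * int (n - d) | j. True}"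
  proof
    assume k: "d \<le> k \<and> k < n"
    have "\<forall>l\<in>V. l \<ge> k"
    proof
      fix l assume "l \<in> V"
      then obtain cs ds where h: "sum_list cs = k" "sum_list ds = l" "val r cs = val r ds" using fromV by blast
      have "\<forall>x\<in>set cs. x < n" using h(1) k member_le_sum_list[of _ cs] by fastforce
      then show "l \<ge> k" using low[of cs ds] assms h by simp
    qed
    then show "int ` V = {int k + int j * int (n - d) | j. True}"
      using prog_nat[of "n - d" V k] modV genV k assms by simp
  qed
  have P3: "n \<le> k \<longrightarrow> (\<exists>l::int. l < 0 \<and> int ` V = {int k + j * int (n - d) | j. j \<ge> l})"
  proof
    assume k: "n \<le> k"
    have "val r [k] = val r [k - n, d]"
      using k rd by (simp add: of_nat_diff algebra_simps)
    then have down: "k - (n - d) \<in> V" using inV[of "k - (n - d)" "[k]" "[k - n, d]"] k assms by simp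
    have clos: "\<forall>l\<in>V. l + (n - d) \<in> V"
    proof
      fix l assume "l \<in> V"
      then obtain cs ds where h: "sum_list cs = k" "sum_list ds = l" "val r cs = val r ds" using fromV by blast
      show "l + (n - d) \<in> V"
      proof (cases "\<exists>i<length ds. ds!i \<ge> d")
        case True
        then obtain i where i: "i < length ds" "ds!i \<ge> d" by blast
        then have i': "Suc i < length (0#ds)" "(0#ds) ! Suc i \<ge> d" by auto
        from mvd[OF i'] have "val r (mvd n d i (0#ds)) = val r (0#cs)" "sum_list (mvd n d i (0#ds)) + d = l + n"
          using h by auto
        then show ?thesis using inV[of "l + (n - d)" "0#cs" "mvd n d i (0#ds)"] h assms by simp
      next
        case False
        then have "\<forall>x\<in>set ds. x < d" by (metis in_set_conv_nth not_less)
        then have "l = k" using uqV h by blast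
        then show ?thesis using genV[of 1] k assms by simp
      qed
    qed
    show "\<exists>l::int. l < 0 \<and> int ` V = {int k + j * int (n - d) | j. j \<ge> l}"
      using prog_int[of "n - d" V k] modV down clos k assms by simp
  qed
  show ?thesis using P1 P2 P3 unfolding V_def by blast
qed

end


theorem proposition4p9:
  fixes r :: rat and k :: nat
  assumes "r > 0" and "atomic (S r)" and "k \<ge> 1"
  shows
   "(r < 1 \<longrightarrow>
       (int k < numr r \<longrightarrow> U k (S r) = {k})
     \<and> (numr r \<le> int k \<and> int k < denr r \<longrightarrow>
          int ` U k (S r) = {int k + int j * (denr r - numr r) | j :: nat. True})
     \<and> (int k \<ge> denr r \<longrightarrow> (\<exists>l :: int. l < 0 \<and>
          int ` U k (S r) = {int k + j * (denr r - numr r) | j :: int. j \<ge> l})))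
  \<and> (r > 1 \<and> r \<notin> \<nat> \<longrightarrow>
       (int k < denr r \<longrightarrow> U k (S r) = {k})
     \<and> (denr r \<le> int k \<and> int k < numr r \<longrightarrow>
          int ` U k (S r) = {int k + int j * (numr r - denr r) | j :: nat. True})
     \<and> (int k \<ge> numr r \<longrightarrow> (\<exists>l :: int. l < 0 \<and>
          int ` U k (S r) = {int k + j * (numr r - denr r) | j :: int. j \<ge> l})))
  \<and> (r \<in> \<nat> \<longrightarrow> U k (S r) = {k})"
proof -
  obtain a b where q: "quotient_of r = (a, b)" by (cases "quotient_of r") auto
  have nr: "numr r = a" and dr: "denr r = b" using q by (auto simp: numr_def denr_def)
  have b0: "b > 0" using quotient_of_denom_pos[OF q] .
  have cab: "coprime a b" using quotient_of_coprime[OF q] .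
  have rab: "r = of_int a / of_int b" using quotient_of_div[OF q] .
  have a0: "a > 0" using assms(1) b0 rab by (simp add: zero_less_divide_iff)
  define n where "n = nat a"
  define d where "d = nat b"
  have an: "a = int n" and bd: "b = int d" using a0 b0 by (auto simp: n_def d_def)
  interpret nd n d r
    using a0 b0 cab rab by unfold_locales (auto simp: an bd)
  show ?thesis
  proof (cases "r \<in> \<nat>")
    case True
    then obtain q' where q': "r = of_nat q'" by (auto elim: Nats_cases)
    then have "q' \<ge> 1" using assms(1) by (cases q') auto
    then have "r \<ge> 1" using q' by simp
    then show ?thesis using U_int[OF q' \<open>q' \<ge> 1\<close> assms(3)] True by simp
  next
    case False
    have "d \<noteq> 1"
    proof
      assume "d = 1"
      then have "r = of_nat n" using rab an bd by simp
      then show False using False by simp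
    qed
    then have d2: "d \<ge> 2" using d_pos by simp
    have n2: "n \<ge> 2"
    proof (rule ccontr)
      assume "\<not> n \<ge> 2"
      then have "n = 1" using n_pos by simp
      then show False using not_atomic1 d2 assms(2) by blast
    qed
    have r_nd: "r = of_nat n / of_nat d" using r_def .
    have lt: "r < 1 \<longleftrightarrow> n < d" using d_pos by (simp add: r_nd divide_less_eq)
    have gt: "r > 1 \<longleftrightarrow> d < n" using d_pos by (simp add: r_nd less_divide_eq)
    have A: "r < 1 \<Longrightarrow>
       (int k < numr r \<longrightarrow> U k (S r) = {k})
     \<and> (numr r \<le> int k \<and> int k < denr r \<longrightarrow>
          int ` U k (S r) = {int k + int j * (denr r - numr r) | j :: nat. True})
     \<and> (int k \<ge> denr r \<longrightarrow> (\<exists>l :: int. l < 0 \<and>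
          int ` U k (S r) = {int k + j * (denr r - numr r) | j :: int. j \<ge> l}))"
    proof -
      assume "r < 1"
      then have nd: "n < d" using lt by simp
      have e: "denr r - numr r = int (d - n)" using nd by (simp add: nr dr an bd)
      show ?thesis unfolding e using caseA[OF n2 nd assms(3)] by (simp add: nr dr an bd)
    qed
    have B: "r > 1 \<Longrightarrow>
       (int k < denr r \<longrightarrow> U k (S r) = {k})
     \<and> (denr r \<le> int k \<and> int k < numr r \<longrightarrow>
          int ` U k (S r) = {int k + int j * (numr r - denr r) | j :: nat. True})
     \<and> (int k \<ge> numr r \<longrightarrow> (\<exists>l :: int. l < 0 \<and>
          int ` U k (S r) = {int k + j * (numr r - denr r) | j :: int. j \<ge> l}))"
    proof -
      assume "r > 1"
      then have nd: "d < n" using gt by simp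
      have e: "numr r - denr r = int (n - d)" using nd by (simp add: nr dr an bd)
      show ?thesis unfolding e using caseB[OF d2 nd assms(3)] by (simp add: nr dr an bd)
    qed
    show ?thesis using A B False by blast
  qed
qed


end
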